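(* Let $\phi:\mathbb{R}^m\to\mathbb{R}$ be a sublinear function, $\lambda\in\mathbb{R}^n$ with $\|\lambda\|=1$, and $C=\{(x,y)\in\mathbb{R}^{n+m}:\phi(y)\le\lambda^\mathsf{T} x\}$. Let $(\bar x,\bar y)\in C$ be such that $\phi$ is differentiable at $\bar y$ and $\phi(\bar y)=\lambda^\mathsf{T}\bar x$. Then $(\bar x,\bar y)$ exposes the valid inequality $-\lambda^\mathsf{T} x+\nabla\phi(\bar y)^\mathsf{T} y\le0$ with respect to $C$.
   Context: A function is sublinear if it is convex and positively homogeneous. An inequality $\alpha^\mathsf{T} z\le\beta$ (written $(\alpha,\beta)$) is valid for $C$ if it holds on $C$; it is non-trivial if $\alpha\neq0$. A point $z_0$ exposes a valid inequality $(\alpha,\beta)$ with respect to a convex set $C$ if $\alpha^\mathsf{T} z_0=\beta$ and for every non-trivial valid inequality $\gamma^\mathsf{T} z\le\delta$ for $C$ with $\gamma^\mathsf{T} z_0=\delta$ there is $\mu>0$ with $\gamma=\mu\alpha$ and $\delta=\mu\beta$. *)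

theory Defs
  imports "HOL-Analysis.Analysis"
begin

definition sublinear :: "('a::real_vector \<Rightarrow> real) \<Rightarrow> bool" where
  "sublinear f \<longleftrightarrow> convex_on UNIV f \<and> (\<forall>t>0. \<forall>y. f (t *\<^sub>R y) = t * f y)"

definition valid_ineq :: "'a::real_inner \<Rightarrow> real \<Rightarrow> 'a set \<Rightarrow> bool" where
  "valid_ineq \<alpha> \<beta> C \<longleftrightarrow> (\<forall>z\<in>C. \<alpha> \<bullet> z \<le> \<beta>)"

definition exposes :: "'a::real_inner \<Rightarrow> 'a \<Rightarrow> real \<Rightarrow> 'a set \<Rightarrow> bool" where
  "exposes z0 \<alpha> \<beta> C \<longleftrightarrow> \<alpha> \<bullet> z0 = \<beta> \<and>
     (\<forall>\<gamma> \<delta>. \<gamma> \<noteq> 0 \<and> valid_ineq \<gamma> \<delta> C \<and> \<gamma> \<bullet> z0 = \<delta> \<longrightarrow>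
        (\<exists>\<mu>>0. \<gamma> = \<mu> *\<^sub>R \<alpha> \<and> \<delta> = \<mu> * \<beta>))"

end

theory Submission
  imports Defs
begin

lemma tangent_ineq:
  fixes \<phi> :: "'a::real_normed_vector \<Rightarrow> real"
  assumes cv: "convex_on UNIV \<phi>" and d: "(\<phi> has_derivative G) (at ybar)" and lG: "linear G"
  shows "\<phi> y - \<phi> ybar \<ge> G (y - ybar)"
proof -
  define dd where "dd = y - ybar"
  define f where "f = (\<lambda>t::real. \<phi> (ybar + t *\<^sub>R dd))"
  have cf: "convex_on UNIV f"
  proof (rule convex_onI)
    fix t :: real and a b
    assume t: "0 < t" "t < 1"
    have "ybar + ((1 - t) * a + t * b) *\<^sub>R dd = (1 - t) *\<^sub>R (ybar + a *\<^sub>R dd) + t *\<^sub>R (ybar + b *\<^sub>R dd)"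
      by (simp add: algebra_simps)
    then show "f ((1 - t) *\<^sub>R a + t *\<^sub>R b) \<le> (1 - t) * f a + t * f b"
      unfolding f_def using convex_onD[OF cv, of t "ybar + a *\<^sub>R dd" "ybar + b *\<^sub>R dd"] t
      by simp
  qed simp
  have dl: "((\<lambda>t::real. ybar + t *\<^sub>R dd) has_derivative (\<lambda>t. t *\<^sub>R dd)) (at 0)"
    by (auto intro!: derivative_eq_intros)
  have d0: "(\<phi> has_derivative G) (at (ybar + 0 *\<^sub>R dd))" using d by simp
  have "(f has_derivative (\<lambda>t. G (t *\<^sub>R dd))) (at 0)"
    unfolding f_def using has_derivative_compose[OF dl d0] by (simp add: o_def)
  moreover have "(\<lambda>t. G (t *\<^sub>R dd)) = (\<lambda>t. t * G dd)"
    using linear_scale[OF lG] by auto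
  ultimately have "(f has_field_derivative G dd) (at 0 within UNIV)"
    by (simp add: has_field_derivative_def mult.commute[of _ "G dd"])
  from convex_on_imp_above_tangent[OF cf _ _ _ this, of 1]
  have "f 1 - f 0 \<ge> G dd" by simp
  then show ?thesis unfolding f_def dd_def by simp
qed

theorem lemmaA2:
  fixes \<phi> :: "real^'m \<Rightarrow> real" and lam xbar :: "real^'n" and ybar g :: "real^'m"
    and C :: "((real^'n) \<times> (real^'m)) set"
  assumes "sublinear \<phi>"
    and "norm lam = 1"
    and "C = {(x, y). \<phi> y \<le> lam \<bullet> x}"
    and "(xbar, ybar) \<in> C"
    and "(\<phi> has_derivative (\<lambda>h. g \<bullet> h)) (at ybar)"
    and "\<phi> ybar = lam \<bullet> xbar"
  shows "valid_ineq (- lam, g) 0 C \<and> exposes (xbar, ybar) (- lam, g) 0 C"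
proof -
  have cv: "convex_on UNIV \<phi>" and hom: "\<And>t y. t > 0 \<Longrightarrow> \<phi> (t *\<^sub>R y) = t * \<phi> y"
    using assms(1) unfolding sublinear_def by auto
  have lG: "linear (\<lambda>h. g \<bullet> h)" using bounded_linear_inner_right bounded_linear.linear by blast
  have tan: "\<And>y. \<phi> y - \<phi> ybar \<ge> g \<bullet> (y - ybar)"
    using tangent_ineq[OF cv assms(5) lG] by blast
  have phi0: "\<phi> 0 = 0" using hom[of 2 0] by simp
  have phi2: "\<phi> (2 *\<^sub>R ybar) = 2 * \<phi> ybar" using hom[of 2 ybar] by simp
  have e1: "g \<bullet> ybar \<le> \<phi> ybar" using tan[of "2 *\<^sub>R ybar"] phi2 by (simp add: algebra_simps)
  have e2: "g \<bullet> ybar \<ge> \<phi> ybar" using tan[of 0] phi0 by (simp add: inner_diff_right)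
  have geq: "g \<bullet> ybar = \<phi> ybar" using e1 e2 by simp
  have below: "\<And>y. g \<bullet> y \<le> \<phi> y" using tan geq by (simp add: inner_diff_right)
  have ll: "lam \<bullet> lam = 1" using assms(2) by (simp add: norm_eq_sqrt_inner)
  have valid: "valid_ineq (- lam, g) 0 C"
    unfolding valid_ineq_def assms(3) using below
    by (auto simp: inner_Pair intro: order_trans)
  have ex: "exposes (xbar, ybar) (- lam, g) 0 C"
    unfolding exposes_def
  proof (intro conjI allI impI)
    show "(- lam, g) \<bullet> (xbar, ybar) = 0" using geq assms(6) by (simp add: inner_Pair)
  next
    fix \<gamma> :: "(real^'n) \<times> (real^'m)" and \<delta>
    assume h: "\<gamma> \<noteq> 0 \<and> valid_ineq \<gamma> \<delta> C \<and> \<gamma> \<bullet> (xbar, ybar) = \<delta>"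
    obtain g1 g2 where gg: "\<gamma> = (g1, g2)" by fastforce
    have V: "\<And>x y. \<phi> y \<le> lam \<bullet> x \<Longrightarrow> g1 \<bullet> x + g2 \<bullet> y \<le> \<delta>"
      using h unfolding valid_ineq_def assms(3) gg by (auto simp: inner_Pair)
    have z0: "g1 \<bullet> xbar + g2 \<bullet> ybar = \<delta>" using h gg by (simp add: inner_Pair)
    have "g1 \<bullet> 0 + g2 \<bullet> 0 \<le> \<delta>" by (rule V) (simp add: phi0)
    hence d1: "0 \<le> \<delta>" by simp
    have "\<phi> (2 *\<^sub>R ybar) \<le> lam \<bullet> (2 *\<^sub>R xbar)" using phi2 assms(6) by simp
    from V[OF this] z0 have d2: "\<delta> \<le> 0" by simp
    have d0: "\<delta> = 0" using d1 d2 by simp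
    have W: "\<And>w. lam \<bullet> w \<ge> 0 \<Longrightarrow> g1 \<bullet> w \<le> 0"
    proof -
      fix w assume "lam \<bullet> w \<ge> 0"
      hence "\<phi> ybar \<le> lam \<bullet> (xbar + w)" using assms(6) by (simp add: inner_add_right)
      from V[OF this] z0 d0 show "g1 \<bullet> w \<le> 0" by (simp add: inner_add_right)
    qed
    define c where "c = g1 \<bullet> lam"
    define w where "w = g1 - c *\<^sub>R lam"
    have lw: "lam \<bullet> w = 0" unfolding w_def c_def using ll
      by (simp add: inner_diff_right inner_commute)
    have "g1 \<bullet> w \<le> 0" using W lw by simp
    moreover have "g1 \<bullet> (- w) \<le> 0" using W[of "- w"] lw by simp
    ultimately have gw: "g1 \<bullet> w = 0" by simp
    have "w \<bullet> w = g1 \<bullet> w - c * (lam \<bullet> w)" unfolding w_def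
      by (simp add: inner_diff_left inner_commute)
    hence "w \<bullet> w = 0" using gw lw by simp
    hence "w = 0" by simp
    hence g1e: "g1 = c *\<^sub>R lam" unfolding w_def by simp
    have "g1 \<bullet> lam \<le> 0" using W ll by simp
    hence cle: "c \<le> 0" unfolding c_def .
    define a where "a = - c"
    have g1a: "g1 = - (a *\<^sub>R lam)" using g1e a_def by simp
    define F where "F = (\<lambda>y. g2 \<bullet> y - a * \<phi> y)"
    have Fmax: "\<forall>y\<in>UNIV. F y \<le> F ybar"
    proof
      fix y :: "real^'m"
      have "\<phi> y \<le> lam \<bullet> (xbar + (\<phi> y - \<phi> ybar) *\<^sub>R lam)"
        using ll assms(6) by (simp add: inner_add_right)
      from V[OF this] have "g1 \<bullet> (xbar + (\<phi> y - \<phi> ybar) *\<^sub>R lam) + g2 \<bullet> y \<le> 0" using d0 by simp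
      hence "- a * (lam \<bullet> xbar) - a * (\<phi> y - \<phi> ybar) + g2 \<bullet> y \<le> 0"
        using ll by (simp add: g1a inner_add_right algebra_simps)
      moreover have "- a * (lam \<bullet> xbar) + g2 \<bullet> ybar = 0" using z0 d0 by (simp add: g1a)
      ultimately show "F y \<le> F ybar" unfolding F_def using assms(6)
        by (simp add: algebra_simps)
    qed
    have "(F has_derivative (\<lambda>h. g2 \<bullet> h - a * (g \<bullet> h))) (at ybar)"
      unfolding F_def
      by (intro has_derivative_diff has_derivative_mult_right assms(5) has_derivative_inner_right[OF has_derivative_ident])
    then have "(\<lambda>h. g2 \<bullet> h - a * (g \<bullet> h)) = (\<lambda>v. 0)"
      using differential_zero_maxmin[of ybar UNIV F] Fmax by blast
    hence "g2 \<bullet> (g2 - a *\<^sub>R g) - a * (g \<bullet> (g2 - a *\<^sub>R g)) = 0" by metis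
    hence "(g2 - a *\<^sub>R g) \<bullet> (g2 - a *\<^sub>R g) = 0"
      by (simp add: inner_diff_left inner_diff_right inner_commute algebra_simps)
    hence g2a: "g2 = a *\<^sub>R g" by simp
    have "a \<noteq> 0" using h gg g1a g2a by (auto simp: zero_prod_def)
    hence apos: "a > 0" using cle a_def by simp
    show "\<exists>\<mu>>0. \<gamma> = \<mu> *\<^sub>R (- lam, g) \<and> \<delta> = \<mu> * 0"
      using apos gg g1a g2a d0 by (intro exI[of _ a]) simp
  qed
  show ?thesis using valid ex by simp
qed

end
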